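(* Let $K$ be a class of partial functions from $\mathbb{N}^k$ to $\mathbb{N}$ (of various arities $k\ge 1$) satisfying the following three conditions: (1) (Closure) $K$ contains all partial recursive functions and is closed under substitution (composition), primitive recursion and the $\mu$-operator (minimization). (2) (Computation records) For every unary function $f\in K$ there exist a set $M\subseteq\mathbb{N}$ and unary functions $\alpha,\omega\in K$ whose domains contain $M$, such that (a) the indicator function of $M$ (equal to $1$ on $M$ and $0$ outside $M$) belongs to $K$, and (b) for all $x,y\in\mathbb{N}$, $f(x)$ is defined and equals $y$ if and only if there exists $m\in M$ with $\alpha(m)=x$ and $\omega(m)=y$. (3) (Programs) There exists a binary function $F\in K$ that is universal for the unary functions in $K$: for every unary $f\in K$ there is $n\in\mathbb{N}$ such that the function $x\mapsto F(n,x)$ coincides with $f$ (as partial functions). Then there exists a set $A\subseteq\mathbb{N}$ such that $K$ is exactly the class of all partial functions that are partial recursive relative to the oracle set $A$.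
   Context: Substitution, primitive recursion and minimization are the usual operations on partial functions of natural arguments. A partial function is partial recursive relative to a set $A\subseteq\mathbb{N}$ if it is computable by an oracle machine with oracle $A$ (equivalently, its graph is recursively enumerable relative to $A$). *)

theory Defs
  imports Main
begin

text \<open>A partial function of arity k is represented by a pair (k, f) with
  f :: nat list => nat option, where f xs = None whenever length xs ~= k.\<close>

type_synonym pfun = "nat list \<Rightarrow> nat option"

definition wf_pf :: "nat \<Rightarrow> pfun \<Rightarrow> bool" where
  "wf_pf k f \<longleftrightarrow> (\<forall>xs. length xs \<noteq> k \<longrightarrow> f xs = None)"

definition comp_pf :: "nat \<Rightarrow> pfun \<Rightarrow> pfun list \<Rightarrow> pfun" where
  "comp_pf n h gs xs =
     (if length xs = n \<and> (\<forall>g\<in>set gs. g xs \<noteq> None)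
      then h (map (\<lambda>g. the (g xs)) gs) else None)"

fun prec_aux :: "pfun \<Rightarrow> pfun \<Rightarrow> nat list \<Rightarrow> nat \<Rightarrow> nat option" where
  "prec_aux g h xs 0 = g xs"
| "prec_aux g h xs (Suc y) =
     (case prec_aux g h xs y of None \<Rightarrow> None | Some z \<Rightarrow> h (xs @ [y, z]))"

definition primrec_pf :: "nat \<Rightarrow> pfun \<Rightarrow> pfun \<Rightarrow> pfun" where
  "primrec_pf n g h xs =
     (if length xs = Suc n then prec_aux g h (butlast xs) (last xs) else None)"

definition mu_ok :: "pfun \<Rightarrow> nat list \<Rightarrow> nat \<Rightarrow> bool" where
  "mu_ok g xs y \<longleftrightarrow> g (xs @ [y]) = Some 0 \<and> (\<forall>z<y. \<exists>v. g (xs @ [z]) = Some (Suc v))"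

definition mu_pf :: "nat \<Rightarrow> pfun \<Rightarrow> pfun" where
  "mu_pf n g xs =
     (if length xs = n \<and> (\<exists>y. mu_ok g xs y) then Some (LEAST y. mu_ok g xs y) else None)"

inductive_set pr_rel :: "nat set \<Rightarrow> (nat \<times> pfun) set" for A :: "nat set" where
  zero: "(n, \<lambda>xs. if length xs = n then Some 0 else None) \<in> pr_rel A"
| succ: "(1, \<lambda>xs. if length xs = 1 then Some (Suc (hd xs)) else None) \<in> pr_rel A"
| proj: "i < n \<Longrightarrow> (n, \<lambda>xs. if length xs = n then Some (xs ! i) else None) \<in> pr_rel A"
| orac: "(1, \<lambda>xs. if length xs = 1 then Some (if hd xs \<in> A then 1 else 0) else None) \<in> pr_rel A"
| subst: "(m, h) \<in> pr_rel A \<Longrightarrow> length gs = m \<Longrightarrow> (\<forall>g\<in>set gs. (n, g) \<in> pr_rel A)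
          \<Longrightarrow> (n, comp_pf n h gs) \<in> pr_rel A"
| prim_rec: "(n, g) \<in> pr_rel A \<Longrightarrow> (Suc (Suc n), h) \<in> pr_rel A
          \<Longrightarrow> (Suc n, primrec_pf n g h) \<in> pr_rel A"
| minimize: "(Suc n, g) \<in> pr_rel A \<Longrightarrow> (n, mu_pf n g) \<in> pr_rel A"

abbreviation partial_recursive :: "nat \<Rightarrow> pfun \<Rightarrow> bool" where
  "partial_recursive k f \<equiv> (k, f) \<in> pr_rel {}"

definition indicator_pf :: "nat set \<Rightarrow> pfun" where
  "indicator_pf M xs = (if length xs = 1 then Some (if hd xs \<in> M then 1 else 0) else None)"

end

theory Submission
  imports Defs "HOL-Library.Nat_Bijection"
begin


definition tot :: "nat \<Rightarrow> (nat list \<Rightarrow> nat) \<Rightarrow> pfun" where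
  "tot n \<phi> = (\<lambda>xs. if length xs = n then Some (\<phi> xs) else None)"

lemma tot_cong: "(\<And>xs. length xs = n \<Longrightarrow> \<phi> xs = \<psi> xs) \<Longrightarrow> tot n \<phi> = tot n \<psi>"
  unfolding tot_def by auto

lemma pr_ext: "(n, tot n \<phi>) \<in> pr_rel A \<Longrightarrow> (\<And>xs. length xs = n \<Longrightarrow> \<phi> xs = \<psi> xs) \<Longrightarrow> (n, tot n \<psi>) \<in> pr_rel A"
  using tot_cong by metis

lemma zero_pr: "(n, tot n (\<lambda>_. 0)) \<in> pr_rel A" unfolding tot_def by (rule pr_rel.zero)
lemma succ_base: "(1, tot 1 (\<lambda>xs. Suc (hd xs))) \<in> pr_rel A" unfolding tot_def by (rule pr_rel.succ)
lemma proj_pr: "i < n \<Longrightarrow> (n, tot n (\<lambda>xs. xs ! i)) \<in> pr_rel A" unfolding tot_def by (rule pr_rel.proj)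
lemma orac_base: "(1, tot 1 (\<lambda>xs. if hd xs \<in> A then 1 else 0)) \<in> pr_rel A" unfolding tot_def by (rule pr_rel.orac)

lemma comp_tot: "length \<psi>s = m \<Longrightarrow> comp_pf n (tot m \<phi>) (map (tot n) \<psi>s) = tot n (\<lambda>xs. \<phi> (map (\<lambda>\<psi>. \<psi> xs) \<psi>s))"
  unfolding comp_pf_def tot_def by (auto simp: fun_eq_iff comp_def)

lemma comp_pr: "(m, tot m \<phi>) \<in> pr_rel A \<Longrightarrow> length \<psi>s = m \<Longrightarrow> (\<forall>\<psi>\<in>set \<psi>s. (n, tot n \<psi>) \<in> pr_rel A)
   \<Longrightarrow> (n, tot n (\<lambda>xs. \<phi> (map (\<lambda>\<psi>. \<psi> xs) \<psi>s))) \<in> pr_rel A"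
proof -
  assume a: "(m, tot m \<phi>) \<in> pr_rel A" "length \<psi>s = m" "\<forall>\<psi>\<in>set \<psi>s. (n, tot n \<psi>) \<in> pr_rel A"
  have "(n, comp_pf n (tot m \<phi>) (map (tot n) \<psi>s)) \<in> pr_rel A"
    by (rule pr_rel.subst[OF a(1)]) (use a in auto)
  then show ?thesis using a(2) by (simp add: comp_tot)
qed

lemma unary_pr: "(1, tot 1 \<phi>) \<in> pr_rel A \<Longrightarrow> (\<And>x. \<phi> [x] = f x) \<Longrightarrow> (n, tot n \<psi>) \<in> pr_rel A
  \<Longrightarrow> (n, tot n (\<lambda>xs. f (\<psi> xs))) \<in> pr_rel A"
  using comp_pr[of 1 \<phi> A "[\<psi>]" n] by simp

lemma binary_pr: "(2, tot 2 \<phi>) \<in> pr_rel A \<Longrightarrow> (\<And>x y. \<phi> [x, y] = f x y) \<Longrightarrow> (n, tot n \<psi>1) \<in> pr_rel A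
  \<Longrightarrow> (n, tot n \<psi>2) \<in> pr_rel A \<Longrightarrow> (n, tot n (\<lambda>xs. f (\<psi>1 xs) (\<psi>2 xs))) \<in> pr_rel A"
  using comp_pr[of 2 \<phi> A "[\<psi>1, \<psi>2]" n] by simp

fun rtot :: "(nat list \<Rightarrow> nat) \<Rightarrow> (nat list \<Rightarrow> nat) \<Rightarrow> nat list \<Rightarrow> nat \<Rightarrow> nat" where
  "rtot g h xs 0 = g xs"
| "rtot g h xs (Suc y) = h (xs @ [y, rtot g h xs y])"

lemma prec_tot: "length xs = n \<Longrightarrow> prec_aux (tot n g) (tot (Suc (Suc n)) h) xs y = Some (rtot g h xs y)"
  by (induction y) (auto simp: tot_def)

lemma primrec_tot: "primrec_pf n (tot n g) (tot (Suc (Suc n)) h) = tot (Suc n) (\<lambda>xs. rtot g h (butlast xs) (last xs))"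
proof
  fix xs :: "nat list"
  show "primrec_pf n (tot n g) (tot (Suc (Suc n)) h) xs = tot (Suc n) (\<lambda>xs. rtot g h (butlast xs) (last xs)) xs"
    by (cases "length xs = Suc n") (auto simp: primrec_pf_def tot_def[of "Suc n"] prec_tot)
qed

lemma primrec_pr: "(n, tot n g) \<in> pr_rel A \<Longrightarrow> (Suc (Suc n), tot (Suc (Suc n)) h) \<in> pr_rel A
   \<Longrightarrow> (Suc n, tot (Suc n) (\<lambda>xs. rtot g h (butlast xs) (last xs))) \<in> pr_rel A"
  using pr_rel.prim_rec primrec_tot by metis

lemma mu_tot: assumes "length xs = n"
  shows "mu_pf n (tot (Suc n) \<phi>) xs = (if \<exists>y. \<phi> (xs@[y]) = 0 then Some (LEAST y. \<phi> (xs@[y]) = 0) else None)"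
proof -
  have ok: "\<And>y. mu_ok (tot (Suc n) \<phi>) xs y \<longleftrightarrow> \<phi> (xs@[y]) = 0 \<and> (\<forall>z<y. \<phi> (xs@[z]) \<noteq> 0)"
    unfolding mu_ok_def tot_def using assms by (auto simp: gr0_conv_Suc)
  show ?thesis
  proof (cases "\<exists>y. \<phi> (xs@[y]) = 0")
    case True
    define y0 where "y0 = (LEAST y. \<phi> (xs@[y]) = 0)"
    have y0: "mu_ok (tot (Suc n) \<phi>) xs y0" unfolding ok y0_def
      using True by (metis (mono_tags, lifting) LeastI not_less_Least)
    have "(LEAST y. mu_ok (tot (Suc n) \<phi>) xs y) = y0"
      by (rule Least_equality[of "mu_ok (tot (Suc n) \<phi>) xs", OF y0]) (auto simp: ok y0_def intro: Least_le)
    then show ?thesis using True y0 assms unfolding mu_pf_def y0_def by auto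
  next
    case False
    then show ?thesis unfolding mu_pf_def ok by auto
  qed
qed

lemma mu_total_pr: "(Suc n, tot (Suc n) \<phi>) \<in> pr_rel A \<Longrightarrow> (\<And>xs. length xs = n \<Longrightarrow> \<exists>y. \<phi> (xs@[y]) = 0)
  \<Longrightarrow> (n, tot n (\<lambda>xs. LEAST y. \<phi> (xs@[y]) = 0)) \<in> pr_rel A"
proof -
  assume a: "(Suc n, tot (Suc n) \<phi>) \<in> pr_rel A" and e: "\<And>xs. length xs = n \<Longrightarrow> \<exists>y. \<phi> (xs@[y]) = 0"
  have "(n, mu_pf n (tot (Suc n) \<phi>)) \<in> pr_rel A" by (rule pr_rel.minimize[OF a])
  moreover have "mu_pf n (tot (Suc n) \<phi>) = tot n (\<lambda>xs. LEAST y. \<phi> (xs@[y]) = 0)"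
  proof
    fix xs :: "nat list"
    show "mu_pf n (tot (Suc n) \<phi>) xs = tot n (\<lambda>xs. LEAST y. \<phi> (xs@[y]) = 0) xs"
      using mu_tot[of xs n \<phi>] e[of xs] by (cases "length xs = n") (auto simp: tot_def mu_pf_def)
  qed
  ultimately show ?thesis by simp
qed

lemma succ_pr: "(n, tot n \<psi>) \<in> pr_rel A \<Longrightarrow> (n, tot n (\<lambda>xs. Suc (\<psi> xs))) \<in> pr_rel A"
  by (rule unary_pr[OF succ_base]) auto

lemma const_pr: "(n, tot n (\<lambda>_. c)) \<in> pr_rel A"
  by (induction c) (auto intro: zero_pr succ_pr)

lemma undef_pr: "(n, \<lambda>xs. None) \<in> pr_rel A"
proof -
  have "(n, mu_pf n (tot (Suc n) (\<lambda>_. 1))) \<in> pr_rel A"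
    by (rule pr_rel.minimize) (rule const_pr)
  moreover have "mu_pf n (tot (Suc n) (\<lambda>_. 1)) = (\<lambda>xs. None)"
  proof
    fix xs :: "nat list"
    show "mu_pf n (tot (Suc n) (\<lambda>_. 1)) xs = None"
      using mu_tot[of xs n "\<lambda>_. 1"] by (cases "length xs = n") (auto simp: mu_pf_def)
  qed
  ultimately show ?thesis by simp
qed



lemma pred_base: "(1, tot 1 (\<lambda>xs. hd xs - 1)) \<in> pr_rel A"
proof -
  have "(Suc 0, tot (Suc 0) (\<lambda>xs. rtot (\<lambda>_. 0) (\<lambda>xs. xs!0) (butlast xs) (last xs))) \<in> pr_rel A"
    by (rule primrec_pr[OF zero_pr proj_pr]) simp
  moreover have "rtot (\<lambda>_. 0) (\<lambda>xs. xs!0) [] y = y - 1" for y by (cases y) auto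
  ultimately show ?thesis by (auto elim!: pr_ext simp: length_Suc_conv)
qed

lemma pred_pr: "(n, tot n \<psi>) \<in> pr_rel A \<Longrightarrow> (n, tot n (\<lambda>xs. \<psi> xs - 1)) \<in> pr_rel A"
  by (rule unary_pr[OF pred_base]) auto

lemma add_base: "(2, tot 2 (\<lambda>xs. xs!0 + xs!1)) \<in> pr_rel A"
proof -
  have "(Suc (Suc 0), tot (Suc (Suc 0)) (\<lambda>xs. rtot (\<lambda>xs. xs!0) (\<lambda>xs. Suc (xs!2)) (butlast xs) (last xs))) \<in> pr_rel A"
    by (rule primrec_pr[OF proj_pr succ_pr[OF proj_pr]]) simp_all
  moreover have "rtot (\<lambda>xs. xs!0) (\<lambda>xs. Suc (xs!2)) [x] y = x + y" for x y by (induction y) auto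
  ultimately show ?thesis by (auto elim!: pr_ext simp: length_Suc_conv numeral_2_eq_2)
qed

lemma add_pr: "(n, tot n \<psi>1) \<in> pr_rel A \<Longrightarrow> (n, tot n \<psi>2) \<in> pr_rel A \<Longrightarrow> (n, tot n (\<lambda>xs. \<psi>1 xs + \<psi>2 xs)) \<in> pr_rel A"
  by (rule binary_pr[OF add_base]) auto

lemma monus_base: "(2, tot 2 (\<lambda>xs. xs!0 - xs!1)) \<in> pr_rel A"
proof -
  have "(Suc (Suc 0), tot (Suc (Suc 0)) (\<lambda>xs. rtot (\<lambda>xs. xs!0) (\<lambda>xs. xs!2 - 1) (butlast xs) (last xs))) \<in> pr_rel A"
    by (rule primrec_pr[OF proj_pr pred_pr[OF proj_pr]]) simp_all
  moreover have "rtot (\<lambda>xs. xs!0) (\<lambda>xs. xs!2 - 1) [x] y = x - y" for x y by (induction y) auto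
  ultimately show ?thesis by (auto elim!: pr_ext simp: length_Suc_conv numeral_2_eq_2)
qed

lemma monus_pr: "(n, tot n \<psi>1) \<in> pr_rel A \<Longrightarrow> (n, tot n \<psi>2) \<in> pr_rel A \<Longrightarrow> (n, tot n (\<lambda>xs. \<psi>1 xs - \<psi>2 xs)) \<in> pr_rel A"
  by (rule binary_pr[OF monus_base]) auto

lemma tri_base: "(1, tot 1 (\<lambda>xs. triangle (hd xs))) \<in> pr_rel A"
proof -
  have "(Suc 0, tot (Suc 0) (\<lambda>xs. rtot (\<lambda>_. 0) (\<lambda>xs. xs!1 + Suc (xs!0)) (butlast xs) (last xs))) \<in> pr_rel A"
    by (rule primrec_pr[OF zero_pr add_pr[OF proj_pr succ_pr[OF proj_pr]]]) simp_all
  moreover have "rtot (\<lambda>_. 0) (\<lambda>xs. xs!1 + Suc (xs!0)) [] y = triangle y" for y by (induction y) auto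
  ultimately show ?thesis by (auto elim!: pr_ext simp: length_Suc_conv)
qed

lemma tri_pr: "(n, tot n \<psi>) \<in> pr_rel A \<Longrightarrow> (n, tot n (\<lambda>xs. triangle (\<psi> xs))) \<in> pr_rel A"
  by (rule unary_pr[OF tri_base]) auto

lemma pair_pr: "(n, tot n \<psi>1) \<in> pr_rel A \<Longrightarrow> (n, tot n \<psi>2) \<in> pr_rel A \<Longrightarrow> (n, tot n (\<lambda>xs. prod_encode (\<psi>1 xs, \<psi>2 xs))) \<in> pr_rel A"
  unfolding prod_encode_def by (simp add: add_pr tri_pr)

definition dsum :: "nat \<Rightarrow> nat" where "dsum z = (LEAST s. z < triangle (Suc s))"

lemma dsum_base: "(1, tot 1 (\<lambda>xs. dsum (hd xs))) \<in> pr_rel A"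
proof -
  have "(Suc 0, tot (Suc 0) (\<lambda>xs. LEAST y. (1 - (triangle (Suc ((xs@[y])!1)) - (xs@[y])!0)) = 0)) \<in> pr_rel A"
  proof (rule mu_total_pr[OF monus_pr[OF const_pr monus_pr[OF tri_pr[OF succ_pr[OF proj_pr]] proj_pr]]])
    fix xs :: "nat list" assume "length xs = Suc 0"
    then obtain z where "xs = [z]" by (auto simp: length_Suc_conv)
    then show "\<exists>y. (1 - (triangle (Suc ((xs@[y])!1)) - (xs@[y])!0)) = 0"
      by (intro exI[of _ z]) auto
  qed auto
  moreover have "(1 - (t - z) = (0::nat)) \<longleftrightarrow> z < t" for t z :: nat by auto
  ultimately show ?thesis by (auto elim!: pr_ext simp: length_Suc_conv dsum_def)
qed

lemma triangle_mono: "m \<le> n \<Longrightarrow> triangle m \<le> triangle n"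
  by (induction n rule: dec_induct) auto

lemma dsum_enc: "dsum (prod_encode (a, b)) = a + b"
  unfolding dsum_def
proof (rule Least_equality)
  show "prod_encode (a, b) < triangle (Suc (a + b))" by (simp add: prod_encode_def)
  fix s assume "prod_encode (a, b) < triangle (Suc s)"
  then show "a + b \<le> s"
  proof (rule contrapos_pp)
    assume "\<not> a + b \<le> s"
    then have "triangle (Suc s) \<le> triangle (a+b)" by (intro triangle_mono) simp
    then show "\<not> prod_encode (a, b) < triangle (Suc s)" unfolding prod_encode_def by (simp del: triangle_Suc)
  qed
qed

definition pfst :: "nat \<Rightarrow> nat" where "pfst z = fst (prod_decode z)"
definition psnd :: "nat \<Rightarrow> nat" where "psnd z = snd (prod_decode z)"

lemma pfst_enc[simp]: "pfst (prod_encode (a, b)) = a" by (simp add: pfst_def)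
lemma psnd_enc[simp]: "psnd (prod_encode (a, b)) = b" by (simp add: psnd_def)
lemma enc_pfst_psnd[simp]: "prod_encode (pfst z, psnd z) = z" by (simp add: pfst_def psnd_def)

lemma pfst_eq: "pfst z = z - triangle (dsum z)"
proof -
  obtain a b where z: "z = prod_encode (a, b)" by (metis enc_pfst_psnd)
  have d: "dsum z = a + b" using z dsum_enc by simp
  have "pfst z = a" using z by simp
  moreover have "z - triangle (a+b) = a" using z by (simp add: prod_encode_def)
  ultimately show ?thesis using d by simp
qed

lemma psnd_eq: "psnd z = dsum z - pfst z"
proof -
  obtain a b where z: "z = prod_encode (a, b)" by (metis enc_pfst_psnd)
  show ?thesis unfolding z dsum_enc by simp
qed

lemma dsum_pr: "(n, tot n \<psi>) \<in> pr_rel A \<Longrightarrow> (n, tot n (\<lambda>xs. dsum (\<psi> xs))) \<in> pr_rel A"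
  by (rule unary_pr[OF dsum_base]) auto

lemma pfst_pr: "(n, tot n \<psi>) \<in> pr_rel A \<Longrightarrow> (n, tot n (\<lambda>xs. pfst (\<psi> xs))) \<in> pr_rel A"
  unfolding pfst_eq by (intro monus_pr tri_pr dsum_pr)

lemma psnd_pr: "(n, tot n \<psi>) \<in> pr_rel A \<Longrightarrow> (n, tot n (\<lambda>xs. psnd (\<psi> xs))) \<in> pr_rel A"
  unfolding psnd_eq by (intro monus_pr pfst_pr dsum_pr)

lemma eq_pr: "(n, tot n \<psi>1) \<in> pr_rel A \<Longrightarrow> (n, tot n \<psi>2) \<in> pr_rel A \<Longrightarrow> (n, tot n (\<lambda>xs. if \<psi>1 xs = \<psi>2 xs then 1 else 0)) \<in> pr_rel A"
proof -
  assume a: "(n, tot n \<psi>1) \<in> pr_rel A" "(n, tot n \<psi>2) \<in> pr_rel A"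
  have "(n, tot n (\<lambda>xs. 1 - ((\<psi>1 xs - \<psi>2 xs) + (\<psi>2 xs - \<psi>1 xs)))) \<in> pr_rel A"
    by (intro monus_pr const_pr add_pr a)
  then show ?thesis by (rule pr_ext) auto
qed

lemma orac_pr: "(n, tot n \<psi>) \<in> pr_rel A \<Longrightarrow> (n, tot n (\<lambda>xs. if \<psi> xs \<in> A then 1 else 0)) \<in> pr_rel A"
  by (rule unary_pr[OF orac_base]) auto

fun encl :: "nat list \<Rightarrow> nat" where
  "encl [] = 0"
| "encl [x] = x"
| "encl (x#y#xs) = prod_encode (x, encl (y#xs))"

fun decl :: "nat \<Rightarrow> nat \<Rightarrow> nat list" where
  "decl 0 z = []"
| "decl (Suc 0) z = [z]"
| "decl (Suc (Suc k)) z = pfst z # decl (Suc k) (psnd z)"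

lemma decl_encl: "length xs = k \<Longrightarrow> k \<ge> 1 \<Longrightarrow> decl k (encl xs) = xs"
  by (induction xs arbitrary: k rule: encl.induct) auto

lemma length_decl[simp]: "length (decl k z) = k"
  by (induction k z rule: decl.induct) auto

lemma encl_pr: "(Suc k, tot (Suc k) encl) \<in> pr_rel A"
proof (induction k)
  case 0
  show ?case by (rule pr_ext[OF proj_pr[of 0 "Suc 0"]]) (auto simp: length_Suc_conv)
next
  case (Suc k)
  have "(Suc (Suc k), tot (Suc (Suc k)) (\<lambda>xs. encl (map (\<lambda>\<psi>. \<psi> xs) (map (\<lambda>i xs. xs ! Suc i) [0..<Suc k])))) \<in> pr_rel A"
    by (rule comp_pr[OF Suc.IH]) (auto intro: proj_pr)
  then have "(Suc (Suc k), tot (Suc (Suc k)) (\<lambda>xs. prod_encode (xs ! 0, encl (map (\<lambda>\<psi>. \<psi> xs) (map (\<lambda>i xs. xs ! Suc i) [0..<Suc k]))))) \<in> pr_rel A"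
    by (intro pair_pr proj_pr) auto
  then show ?case
  proof (rule pr_ext)
    fix xs :: "nat list" assume "length xs = Suc (Suc k)"
    then obtain x y ys where xs: "xs = x # y # ys" and "length ys = k" by (auto simp: length_Suc_conv)
    then have "map (\<lambda>i. (y # ys) ! i) [0..<Suc k] = y # ys"
      by (metis length_Cons map_nth)
    then have "map (\<lambda>\<psi>. \<psi> xs) (map (\<lambda>i xs. xs ! Suc i) [0..<Suc k]) = y # ys"
      using xs by (simp add: comp_def del: upt_Suc)
    then show "prod_encode (xs ! 0, encl (map (\<lambda>\<psi>. \<psi> xs) (map (\<lambda>i xs. xs ! Suc i) [0..<Suc k]))) = encl xs"
      using xs by simp
  qed
qed

lemma decl_pr: "i < Suc k \<Longrightarrow> (n, tot n \<psi>) \<in> pr_rel A \<Longrightarrow> (n, tot n (\<lambda>xs. decl (Suc k) (\<psi> xs) ! i)) \<in> pr_rel A"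
proof (induction k arbitrary: i \<psi>)
  case 0
  then show ?case by (auto elim: pr_ext)
next
  case (Suc k)
  show ?case
  proof (cases i)
    case 0
    then show ?thesis using pfst_pr[OF Suc.prems(2)] by simp
  next
    case (Suc j)
    then show ?thesis using Suc.IH[of j "\<lambda>xs. psnd (\<psi> xs)"] Suc.prems psnd_pr by simp
  qed
qed



lemma pr_wf: "(n, f) \<in> pr_rel A \<Longrightarrow> wf_pf n f"
  by (induction rule: pr_rel.induct) (auto simp: wf_pf_def comp_pf_def primrec_pf_def mu_pf_def)

lemma prB_in_K:
  assumes contains_pr: "\<forall>k f. k \<ge> 1 \<longrightarrow> partial_recursive k f \<longrightarrow> (k, f) \<in> K"
    and closed_comp: "\<forall>m n h gs. (m, h) \<in> K \<longrightarrow> length gs = m \<longrightarrow> (\<forall>g\<in>set gs. (n, g) \<in> K)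
                         \<longrightarrow> (n, comp_pf n h gs) \<in> K"
    and closed_primrec: "\<forall>n g h. ((n \<ge> 1 \<and> (n, g) \<in> K) \<or> (n = 0 \<and> (\<exists>c. g = (\<lambda>xs. if xs = [] then c else None))))
                         \<longrightarrow> (Suc (Suc n), h) \<in> K \<longrightarrow> (Suc n, primrec_pf n g h) \<in> K"
    and closed_mu: "\<forall>n g. n \<ge> 1 \<longrightarrow> (Suc n, g) \<in> K \<longrightarrow> (n, mu_pf n g) \<in> K"
    and ind: "(1, indicator_pf B) \<in> K"
  shows "(n, f) \<in> pr_rel B \<Longrightarrow> n \<ge> 1 \<Longrightarrow> (n, f) \<in> K"
proof (induction rule: pr_rel.induct)
  case (zero n)
  then show ?case using contains_pr pr_rel.zero[of n "{}"] by blast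
next
  case succ
  then show ?case using contains_pr pr_rel.succ[of "{}"] by blast
next
  case (proj i n)
  then show ?case using contains_pr pr_rel.proj[of i n "{}"] by blast
next
  case orac
  have "indicator_pf B = (\<lambda>xs. if length xs = 1 then Some (if hd xs \<in> B then 1 else 0) else None)"
    by (rule ext) (simp add: indicator_pf_def)
  then show ?case using ind by simp
next
  case (subst m h gs n)
  show ?case
  proof (cases "m \<ge> 1")
    case True
    then show ?thesis using subst closed_comp by auto
  next
    case False
    then have m: "m = 0" "gs = []" using subst by (auto simp: Suc_le_eq)
    show ?thesis
    proof (cases "h []")
      case None
      then have "comp_pf n h gs = (\<lambda>xs. None)" using m by (auto simp: comp_pf_def)
      then show ?thesis using contains_pr undef_pr[where A="{}" and n=n] subst by auto
    next
      case (Some c)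
      then have "comp_pf n h gs = tot n (\<lambda>_. c)" using m by (auto simp: comp_pf_def tot_def)
      then show ?thesis using contains_pr const_pr[where A="{}" and n=n and c=c] subst by auto
    qed
  qed
next
  case (prim_rec n g h)
  show ?case
  proof (cases "n \<ge> 1")
    case True
    then show ?thesis using prim_rec closed_primrec by auto
  next
    case False
    then have n: "n = 0" by simp
    have "wf_pf 0 g" using pr_wf prim_rec n by blast
    then have "g = (\<lambda>xs. if xs = [] then g [] else None)" by (auto simp: wf_pf_def)
    then show ?thesis using prim_rec closed_primrec n by (metis le_add1 plus_1_eq_Suc)
  qed
next
  case (minimize n g)
  then show ?case using closed_mu by auto
qed

lemma search_pr:
  fixes B :: "nat set" and \<Phi> f :: pfun
  assumes graph: "\<forall>x y. \<Phi> [x] = Some y \<longleftrightarrow> (\<exists>t\<in>B. pfst (psnd t) = x \<and> psnd (psnd t) = y)"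
    and f1: "\<forall>x. f [x] = \<Phi> [prod_encode (c, x)]" and wf: "wf_pf 1 f"
  shows "(1, f) \<in> pr_rel B"
proof -
  define test where "test xs = (1 - (((if xs!1 \<in> B then 1 else 0) + (if pfst (psnd (xs!1)) = prod_encode (c, xs!0) then 1 else 0)) - 1) :: nat)" for xs :: "nat list"
  have T: "(Suc 1, tot (Suc 1) test) \<in> pr_rel B" unfolding test_def
    by (intro monus_pr add_pr const_pr orac_pr eq_pr pfst_pr psnd_pr pair_pr proj_pr) auto
  have Mu: "(1, mu_pf 1 (tot (Suc 1) test)) \<in> pr_rel B" by (rule pr_rel.minimize[OF T])
  define G where "G = comp_pf 1 (tot 1 (\<lambda>xs. psnd (psnd (hd xs)))) [mu_pf 1 (tot (Suc 1) test)]"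
  have H: "(1, tot 1 (\<lambda>xs. psnd (psnd (hd xs)))) \<in> pr_rel B"
    by (rule pr_ext[OF psnd_pr[OF psnd_pr[OF proj_pr[of 0 1]]]]) (auto simp: length_Suc_conv)
  have "(1, G) \<in> pr_rel B" unfolding G_def
    by (rule pr_rel.subst[OF H]) (use Mu in auto)
  moreover have "G = f"
  proof
    fix xs :: "nat list"
    show "G xs = f xs"
    proof (cases "length xs = 1")
      case False
      then show ?thesis using wf by (auto simp: G_def comp_pf_def wf_pf_def)
    next
      case True
      then obtain x where xs: "xs = [x]" by (auto simp: length_Suc_conv)
      have tz: "test ([x] @ [t]) = 0 \<longleftrightarrow> t \<in> B \<and> pfst (psnd t) = prod_encode (c, x)" for t
        by (auto simp: test_def)
      have mu: "mu_pf 1 (tot (Suc 1) test) [x] = (if \<exists>t. t \<in> B \<and> pfst (psnd t) = prod_encode (c, x)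
            then Some (LEAST t. t \<in> B \<and> pfst (psnd t) = prod_encode (c, x)) else None)"
        using mu_tot[of "[x]" 1 test] by (simp only: tz) simp
      show ?thesis
      proof (cases "\<exists>t. t \<in> B \<and> pfst (psnd t) = prod_encode (c, x)")
        case True
        define t0 where "t0 = (LEAST t. t \<in> B \<and> pfst (psnd t) = prod_encode (c, x))"
        have t0: "t0 \<in> B \<and> pfst (psnd t0) = prod_encode (c, x)"
          unfolding t0_def using True by (rule LeastI_ex)
        then have "\<Phi> [prod_encode (c, x)] = Some (psnd (psnd t0))" using graph by blast
        then show ?thesis using mu True f1 unfolding xs G_def t0_def by (simp add: comp_pf_def tot_def)
      next
        case False
        then have "\<Phi> [prod_encode (c, x)] = None" using graph by (metis not_Some_eq)
        then show ?thesis using mu False f1 unfolding xs G_def by (simp add: comp_pf_def tot_def)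
      qed
    qed
  qed
  ultimately show ?thesis by simp
qed



lemma karity:
  assumes contains_pr: "\<forall>k f. k \<ge> 1 \<longrightarrow> partial_recursive k f \<longrightarrow> (k, f) \<in> K"
    and closed_comp: "\<forall>m n h gs. (m, h) \<in> K \<longrightarrow> length gs = m \<longrightarrow> (\<forall>g\<in>set gs. (n, g) \<in> K)
                         \<longrightarrow> (n, comp_pf n h gs) \<in> K"
    and unary: "\<forall>f. (1, f) \<in> K \<longrightarrow> (1, f) \<in> pr_rel B"
    and fK: "(k, f) \<in> K" and k: "k \<ge> 1" and wf: "wf_pf k f"
  shows "(k, f) \<in> pr_rel B"
proof -
  obtain k' where k': "k = Suc k'" using k by (cases k) auto
  define ds where "ds = map (\<lambda>i. tot 1 (\<lambda>xs. decl k (xs!0) ! i)) [0..<k]"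
  have "\<forall>d\<in>set ds. (1, d) \<in> K"
  proof
    fix d assume "d \<in> set ds"
    then obtain i where i: "i < k" "d = tot 1 (\<lambda>xs. decl k (xs!0) ! i)" by (auto simp: ds_def)
    have "(1, d) \<in> pr_rel {}" unfolding i k' by (rule decl_pr[OF _ proj_pr]) (use i k' in auto)
    then show "(1, d) \<in> K" using contains_pr by auto
  qed
  then have "(1, comp_pf 1 f ds) \<in> K" using closed_comp fK by (auto simp: ds_def)
  then have f1: "(1, comp_pf 1 f ds) \<in> pr_rel B" using unary by blast
  have "(k, comp_pf k (comp_pf 1 f ds) [tot k encl]) \<in> pr_rel B"
    by (rule pr_rel.subst[OF f1]) (use encl_pr[of k' B] k' in auto)
  moreover have "comp_pf k (comp_pf 1 f ds) [tot k encl] = f"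
  proof
    fix xs :: "nat list"
    show "comp_pf k (comp_pf 1 f ds) [tot k encl] xs = f xs"
    proof (cases "length xs = k")
      case False
      then show ?thesis using wf by (auto simp: comp_pf_def wf_pf_def)
    next
      case True
      have "map (\<lambda>g. the (g [encl xs])) ds = map (\<lambda>i. decl k (encl xs) ! i) [0..<k]"
        by (simp add: ds_def tot_def)
      also have "\<dots> = decl k (encl xs)" by (metis length_decl map_nth)
      also have "\<dots> = xs" using decl_encl True k by blast
      finally show ?thesis using True by (simp add: comp_pf_def tot_def ds_def)
    qed
  qed
  ultimately show ?thesis by simp
qed



lemma chi_in_K:
  assumes contains_pr: "\<forall>k f. k \<ge> 1 \<longrightarrow> partial_recursive k f \<longrightarrow> (k, f) \<in> K"
    and closed_comp: "\<forall>m n h gs. (m, h) \<in> K \<longrightarrow> length gs = m \<longrightarrow> (\<forall>g\<in>set gs. (n, g) \<in> K)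
                         \<longrightarrow> (n, comp_pf n h gs) \<in> K"
    and closed_primrec: "\<forall>n g h. ((n \<ge> 1 \<and> (n, g) \<in> K) \<or> (n = 0 \<and> (\<exists>c. g = (\<lambda>xs. if xs = [] then c else None))))
                         \<longrightarrow> (Suc (Suc n), h) \<in> K \<longrightarrow> (Suc n, primrec_pf n g h) \<in> K"
    and aK: "(1, \<alpha>) \<in> K" and wK: "(1, \<omega>) \<in> K" and dom: "\<forall>m\<in>M. \<alpha> [m] \<noteq> None \<and> \<omega> [m] \<noteq> None"
    and iM: "(1, indicator_pf M) \<in> K"
  shows "(1, indicator_pf {t. pfst t \<in> M \<and> \<alpha> [pfst t] = Some (pfst (psnd t)) \<and> \<omega> [pfst t] = Some (psnd (psnd t))}) \<in> K"
    (is "(1, indicator_pf ?B) \<in> K")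
proof -
  have pK: "(n, tot n \<phi>) \<in> K" if "(n, tot n \<phi>) \<in> pr_rel {}" "n \<ge> 1" for n \<phi>
    using contains_pr that by blast
  have compK: "(n, comp_pf n h gs) \<in> K" if "(m, h) \<in> K" "length gs = m" "\<forall>g\<in>set gs. (n, g) \<in> K" for m n h gs
    using closed_comp that by blast
  define p3 where "p3 = tot 3 (\<lambda>xs. pfst (xs!0))"
  have p3: "(3, p3) \<in> K" unfolding p3_def by (rule pK) (auto intro!: pfst_pr proj_pr)
  define a3 where "a3 = comp_pf 3 \<alpha> [p3]"
  define w3 where "w3 = comp_pf 3 \<omega> [p3]"
  have a3: "(3, a3) \<in> K" unfolding a3_def by (rule compK[OF aK]) (use p3 in auto)
  have w3: "(3, w3) \<in> K" unfolding w3_def by (rule compK[OF wK]) (use p3 in auto)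
  define q1 where "q1 = tot 3 (\<lambda>xs. pfst (psnd (xs!0)))"
  define q2 where "q2 = tot 3 (\<lambda>xs. psnd (psnd (xs!0)))"
  have q1: "(3, q1) \<in> K" unfolding q1_def by (rule pK) (auto intro!: pfst_pr psnd_pr proj_pr)
  have q2: "(3, q2) \<in> K" unfolding q2_def by (rule pK) (auto intro!: pfst_pr psnd_pr proj_pr)
  define E where "E = tot 4 (\<lambda>ys. ((if ys!0 = ys!1 then 1 else 0) + (if ys!2 = ys!3 then 1 else 0)) - 1)"
  have E: "(4, E) \<in> K" unfolding E_def by (rule pK) (auto intro!: monus_pr add_pr eq_pr proj_pr const_pr)
  define H where "H = comp_pf 3 E [a3, q1, w3, q2]"
  have H: "(3, H) \<in> K" unfolding H_def by (rule compK[OF E]) (use a3 q1 w3 q2 in auto)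
  define g1 where "g1 = tot 1 (\<lambda>_. 0)"
  have g1: "(1, g1) \<in> K" unfolding g1_def by (rule pK) (auto intro!: const_pr)
  define Gp where "Gp = primrec_pf 1 g1 H"
  have Gp: "(2, Gp) \<in> K"
    using closed_primrec g1 H unfolding Gp_def by (simp add: numeral_3_eq_3 numeral_2_eq_2)
  define i1 where "i1 = comp_pf 1 (indicator_pf M) [tot 1 (\<lambda>xs. pfst (xs!0))]"
  have i1: "(1, i1) \<in> K" unfolding i1_def
    by (rule compK[OF iM]) (auto intro!: pK pfst_pr proj_pr)
  define chi where "chi = comp_pf 1 Gp [tot 1 (\<lambda>xs. xs!0), i1]"
  have chi: "(1, chi) \<in> K" unfolding chi_def
    by (rule compK[OF Gp]) (use i1 in \<open>auto intro!: pK proj_pr simp: One_nat_def\<close>)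
  have "chi = indicator_pf ?B"
  proof
    fix xs :: "nat list"
    show "chi xs = indicator_pf ?B xs"
    proof (cases "length xs = 1")
      case False
      then show ?thesis by (auto simp: chi_def comp_pf_def indicator_pf_def)
    next
      case True
      then obtain t where xs: "xs = [t]" by (auto simp: length_Suc_conv)
      show ?thesis
      proof (cases "pfst t \<in> M")
        case False
        then have "chi xs = Some 0"
          by (simp add: xs chi_def i1_def comp_pf_def tot_def indicator_pf_def Gp_def primrec_pf_def g1_def)
        then show ?thesis using False by (simp add: xs indicator_pf_def)
      next
        case True
        then obtain u v where uv: "\<alpha> [pfst t] = Some u" "\<omega> [pfst t] = Some v" using dom by blast
        have "chi xs = Some ((if u = pfst (psnd t) then 1 else 0) + (if v = psnd (psnd t) then 1 else 0) - 1)"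
          using True uv
          by (simp add: xs chi_def i1_def comp_pf_def tot_def indicator_pf_def Gp_def primrec_pf_def g1_def
              H_def E_def a3_def w3_def p3_def q1_def q2_def numeral_3_eq_3)
        then show ?thesis using True uv by (auto simp: xs indicator_pf_def)
      qed
    qed
  qed
  then show ?thesis using chi by simp
qed



theorem mainTheorem1:
  fixes K :: "(nat \<times> pfun) set"
  assumes arity_ok: "\<forall>(k, f)\<in>K. k \<ge> 1 \<and> wf_pf k f"
    and contains_pr: "\<forall>k f. k \<ge> 1 \<longrightarrow> partial_recursive k f \<longrightarrow> (k, f) \<in> K"
    and closed_comp: "\<forall>m n h gs. (m, h) \<in> K \<longrightarrow> length gs = m \<longrightarrow> (\<forall>g\<in>set gs. (n, g) \<in> K)
                         \<longrightarrow> (n, comp_pf n h gs) \<in> K"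
    and closed_primrec: "\<forall>n g h. ((n \<ge> 1 \<and> (n, g) \<in> K) \<or> (n = 0 \<and> (\<exists>c. g = (\<lambda>xs. if xs = [] then c else None))))
                         \<longrightarrow> (Suc (Suc n), h) \<in> K \<longrightarrow> (Suc n, primrec_pf n g h) \<in> K"
    and closed_mu: "\<forall>n g. n \<ge> 1 \<longrightarrow> (Suc n, g) \<in> K \<longrightarrow> (n, mu_pf n g) \<in> K"
    and records: "\<forall>f. (1, f) \<in> K \<longrightarrow>
                    (\<exists>M \<alpha> \<omega>. (1, \<alpha>) \<in> K \<and> (1, \<omega>) \<in> K \<and>
                       (\<forall>m\<in>M. \<alpha> [m] \<noteq> None \<and> \<omega> [m] \<noteq> None) \<and>
                       (1, indicator_pf M) \<in> K \<and>
                       (\<forall>x y. f [x] = Some y \<longleftrightarrow> (\<exists>m\<in>M. \<alpha> [m] = Some x \<and> \<omega> [m] = Some y)))"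
    and programs: "\<exists>F. (2, F) \<in> K \<and> (\<forall>f. (1, f) \<in> K \<longrightarrow> (\<exists>n. \<forall>x. F [n, x] = f [x]))"
  shows "\<exists>A :: nat set. K = {(k, f). k \<ge> 1 \<and> (k, f) \<in> pr_rel A}"
proof -
  obtain F where F2: "(2, F) \<in> K" and univ: "\<forall>f. (1, f) \<in> K \<longrightarrow> (\<exists>n. \<forall>x. F [n, x] = f [x])"
    using programs by blast
  define F' where "F' = comp_pf 1 F [tot 1 (\<lambda>xs. pfst (xs!0)), tot 1 (\<lambda>xs. psnd (xs!0))]"
  have pK: "(n, tot n \<phi>) \<in> K" if "(n, tot n \<phi>) \<in> pr_rel {}" "n \<ge> 1" for n \<phi>
    using contains_pr that by blast
  have F'K: "(1, F') \<in> K" unfolding F'_def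
  proof (rule closed_comp[rule_format, OF F2])
    show "length [tot 1 (\<lambda>xs. pfst (xs!0)), tot 1 (\<lambda>xs. psnd (xs!0))] = 2" by simp
  qed (use pK[OF pfst_pr[OF proj_pr[of 0 1]]] pK[OF psnd_pr[OF proj_pr[of 0 1]]] in auto)
  have F'v: "F' [z] = F [pfst z, psnd z]" for z by (simp add: F'_def comp_pf_def tot_def)
  obtain M \<alpha> \<omega> where R: "(1, \<alpha>) \<in> K \<and> (1, \<omega>) \<in> K \<and>
                       (\<forall>m\<in>M. \<alpha> [m] \<noteq> None \<and> \<omega> [m] \<noteq> None) \<and>
                       (1, indicator_pf M) \<in> K \<and>
                       (\<forall>x y. F' [x] = Some y \<longleftrightarrow> (\<exists>m\<in>M. \<alpha> [m] = Some x \<and> \<omega> [m] = Some y))"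
    using records[rule_format, OF F'K] by (elim exE) (rule that)
  note aK = R[THEN conjunct1]
  note wK = R[THEN conjunct2, THEN conjunct1]
  note dom = R[THEN conjunct2, THEN conjunct2, THEN conjunct1]
  note iM = R[THEN conjunct2, THEN conjunct2, THEN conjunct2, THEN conjunct1]
  note gr = R[THEN conjunct2, THEN conjunct2, THEN conjunct2, THEN conjunct2]
  define B where "B = {t. pfst t \<in> M \<and> \<alpha> [pfst t] = Some (pfst (psnd t)) \<and> \<omega> [pfst t] = Some (psnd (psnd t))}"
  have iB: "(1, indicator_pf B) \<in> K" unfolding B_def
    by (rule chi_in_K[OF contains_pr closed_comp closed_primrec aK wK dom iM])
  have graph: "\<forall>x y. F' [x] = Some y \<longleftrightarrow> (\<exists>t\<in>B. pfst (psnd t) = x \<and> psnd (psnd t) = y)"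
  proof (intro allI iffI)
    fix x y assume "F' [x] = Some y"
    then obtain m where "m \<in> M" "\<alpha> [m] = Some x" "\<omega> [m] = Some y" using gr by blast
    then show "\<exists>t\<in>B. pfst (psnd t) = x \<and> psnd (psnd t) = y"
      by (intro bexI[of _ "prod_encode (m, prod_encode (x, y))"]) (auto simp: B_def)
  next
    fix x y assume "\<exists>t\<in>B. pfst (psnd t) = x \<and> psnd (psnd t) = y"
    then show "F' [x] = Some y" using gr by (auto simp: B_def)
  qed
  have unary: "\<forall>f. (1, f) \<in> K \<longrightarrow> (1, f) \<in> pr_rel B"
  proof (intro allI impI)
    fix f assume fK: "(1, f) \<in> K"
    then obtain c where c: "\<forall>x. F [c, x] = f [x]" using univ by blast
    have wf: "wf_pf 1 f" using arity_ok fK by blast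
    show "(1, f) \<in> pr_rel B"
      by (rule search_pr[OF graph _ wf, of c]) (simp add: F'v c)
  qed
  have "K = {(k, f). k \<ge> 1 \<and> (k, f) \<in> pr_rel B}"
  proof (intro equalityI subsetI)
    fix p assume "p \<in> K"
    moreover obtain k f where p: "p = (k, f)" by fastforce
    ultimately have kf: "(k, f) \<in> K" "k \<ge> 1" "wf_pf k f" using arity_ok by auto
    have "(k, f) \<in> pr_rel B" by (rule karity[OF contains_pr closed_comp unary kf])
    then show "p \<in> {(k, f). k \<ge> 1 \<and> (k, f) \<in> pr_rel B}" using p kf by simp
  next
    fix p assume "p \<in> {(k, f). k \<ge> 1 \<and> (k, f) \<in> pr_rel B}"
    then obtain k f where p: "p = (k, f)" "k \<ge> 1" "(k, f) \<in> pr_rel B" by auto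
    show "p \<in> K" using prB_in_K[OF contains_pr closed_comp closed_primrec closed_mu iB p(3) p(2)] p by simp
  qed
  then show ?thesis by blast
qed

end
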